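(* Let $h\in\mathbb N$ and $P\in\mathcal C(h)$ be such that every hole is an axis-aligned rectangle. Then for every $s\in P$ there is a path in $P$ from $s$ to a point of $\partial P_0$ of length at most ${\rm diam}_2(P)$.
   Context: $\mathcal C(h)$ is the family of polygonal domains $P=P_0\setminus\bigcup_{i=1}^h\operatorname{int}(P_i)$ with $P_0$ a convex polygon and $P_1,\dots,P_h$ pairwise disjoint convex polygons (holes) in the interior of $P_0$; ${\rm diam}_2(P)=\sup_{s,t\in P}|st|$. *)

theory Defs
  imports "HOL-Analysis.Analysis"
begin

definition convex_polygon :: "(real \<times> real) set \<Rightarrow> bool" where
  "convex_polygon Q \<longleftrightarrow> (\<exists>V. finite V \<and> Q = convex hull V) \<and> interior Q \<noteq> {}"

definition axis_rectangle :: "(real \<times> real) set \<Rightarrow> bool" where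
  "axis_rectangle R \<longleftrightarrow> (\<exists>a b. R = cbox a b \<and> box a b \<noteq> {})"

definition in_class_C :: "nat \<Rightarrow> (real \<times> real) set \<Rightarrow> (nat \<Rightarrow> (real \<times> real) set) \<Rightarrow> bool" where
  "in_class_C h P0 H \<longleftrightarrow> convex_polygon P0
     \<and> (\<forall>i\<in>{1..h}. convex_polygon (H i) \<and> H i \<subseteq> interior P0)
     \<and> (\<forall>i\<in>{1..h}. \<forall>j\<in>{1..h}. i \<noteq> j \<longrightarrow> H i \<inter> H j = {})"

definition domain :: "nat \<Rightarrow> (real \<times> real) set \<Rightarrow> (nat \<Rightarrow> (real \<times> real) set) \<Rightarrow> (real \<times> real) set" where
  "domain h P0 H = P0 - (\<Union>i\<in>{1..h}. interior (H i))"

definition partition01 :: "real list \<Rightarrow> bool" where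
  "partition01 ts \<longleftrightarrow> ts \<noteq> [] \<and> sorted ts \<and> hd ts = 0 \<and> last ts = 1"

definition inscribed_length :: "(real \<Rightarrow> 'a::metric_space) \<Rightarrow> real list \<Rightarrow> real" where
  "inscribed_length g ts = (\<Sum>i<length ts - 1. dist (g (ts ! i)) (g (ts ! Suc i)))"

definition rectifiable_path :: "(real \<Rightarrow> 'a::real_normed_vector) \<Rightarrow> bool" where
  "rectifiable_path g \<longleftrightarrow> path g \<and> bdd_above {inscribed_length g ts | ts. partition01 ts}"

definition path_length :: "(real \<Rightarrow> 'a::real_normed_vector) \<Rightarrow> real" where
  "path_length g = (SUP ts\<in>{ts. partition01 ts}. inscribed_length g ts)"

end

theory Submission
  imports Defs
begin

definition leqp :: "real \<times> real \<Rightarrow> real \<times> real \<Rightarrow> bool" where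
  "leqp z w \<longleftrightarrow> fst z \<le> fst w \<and> snd z \<le> snd w"

definition monoNE :: "(real \<Rightarrow> real \<times> real) \<Rightarrow> bool" where
  "monoNE g \<longleftrightarrow> (\<forall>s t. 0 \<le> s \<longrightarrow> s \<le> t \<longrightarrow> t \<le> 1 \<longrightarrow> leqp (g s) (g t))"

lemma partition01_bounds:
  assumes "partition01 ts" "i < length ts"
  shows "0 \<le> ts ! i" "ts ! i \<le> 1"
proof -
  have ne: "ts \<noteq> []" and so: "sorted ts" and h: "hd ts = 0" and l: "last ts = 1"
    using assms(1) unfolding partition01_def by auto
  have "ts ! 0 \<le> ts ! i" using so assms(2) by (simp add: sorted_nth_mono)
  then show "0 \<le> ts ! i" using h ne by (simp add: hd_conv_nth)
  have "ts ! i \<le> ts ! (length ts - 1)" using so assms(2) by (simp add: sorted_nth_mono)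
  then show "ts ! i \<le> 1" using l ne by (simp add: last_conv_nth)
qed

lemma inscribed_mono_bound:
  assumes m: "monoNE g" and p: "partition01 ts"
  shows "inscribed_length g ts \<le> (fst (g 1) - fst (g 0)) + (snd (g 1) - snd (g 0))"
proof -
  define f where "f = (\<lambda>i. fst (g (ts ! i)) + snd (g (ts ! i)))"
  have ne: "ts \<noteq> []" and so: "sorted ts" and h: "hd ts = 0" and l: "last ts = 1"
    using p unfolding partition01_def by auto
  have "dist (g (ts ! i)) (g (ts ! Suc i)) \<le> f (Suc i) - f i" if i: "i < length ts - 1" for i
  proof -
    have i1: "i < length ts" "Suc i < length ts" using i by auto
    have le: "ts ! i \<le> ts ! Suc i" using so i1 by (simp add: sorted_nth_mono)
    have "leqp (g (ts ! i)) (g (ts ! Suc i))"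
      using m le partition01_bounds[OF p i1(1)] partition01_bounds[OF p i1(2)]
      unfolding monoNE_def by blast
    moreover have "dist (g (ts ! i)) (g (ts ! Suc i))
        \<le> \<bar>fst (g (ts ! i)) - fst (g (ts ! Suc i))\<bar> + \<bar>snd (g (ts ! i)) - snd (g (ts ! Suc i))\<bar>"
      by (metis dist_Pair_Pair dist_real_def prod.collapse real_sqrt_abs sqrt_sum_squares_le_sum_abs power2_abs)
    ultimately show ?thesis unfolding leqp_def f_def by auto
  qed
  then have "inscribed_length g ts \<le> (\<Sum>i<length ts - 1. f (Suc i) - f i)"
    unfolding inscribed_length_def by (intro sum_mono) auto
  also have "\<dots> = f (length ts - 1) - f 0" by (rule sum_lessThan_telescope)
  also have "\<dots> = (fst (g 1) - fst (g 0)) + (snd (g 1) - snd (g 0))"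
    using ne h l by (simp add: f_def last_conv_nth hd_conv_nth)
  finally show ?thesis .
qed

lemma mono_length:
  assumes "path g" "monoNE g"
  shows "rectifiable_path g \<and> path_length g \<le> (fst (g 1) - fst (g 0)) + (snd (g 1) - snd (g 0))"
proof -
  have pn: "partition01 [0,1]" by (simp add: partition01_def)
  have b: "\<forall>x\<in>{inscribed_length g ts |ts. partition01 ts}. x \<le> (fst (g 1) - fst (g 0)) + (snd (g 1) - snd (g 0))"
    using inscribed_mono_bound[OF assms(2)] by auto
  have "rectifiable_path g" unfolding rectifiable_path_def using assms(1) b
    by (meson bdd_above.unfold)
  moreover have "path_length g \<le> (fst (g 1) - fst (g 0)) + (snd (g 1) - snd (g 0))"
    unfolding path_length_def
    by (rule cSUP_least) (use pn inscribed_mono_bound[OF assms(2)] in auto)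
  ultimately show ?thesis by blast
qed

lemma leqp_trans: "leqp a b \<Longrightarrow> leqp b c \<Longrightarrow> leqp a c"
  unfolding leqp_def by auto

lemma mono_line: "leqp a b \<Longrightarrow> monoNE (linepath a b)"
  unfolding monoNE_def leqp_def
proof (intro allI impI)
  fix s t :: real assume ab: "fst a \<le> fst b \<and> snd a \<le> snd b" and st: "0 \<le> s" "s \<le> t" "t \<le> 1"
  have 1: "(t - s) * (fst b - fst a) \<ge> 0" "(t - s) * (snd b - snd a) \<ge> 0" using ab st by auto
  show "fst (linepath a b s) \<le> fst (linepath a b t) \<and> snd (linepath a b s) \<le> snd (linepath a b t)"
    using 1 unfolding linepath_def by (simp add: algebra_simps)
qed

lemma mono_join:
  assumes m1: "monoNE g1" and m2: "monoNE g2" and e: "pathfinish g1 = pathstart g2"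
  shows "monoNE (g1 +++ g2)"
  unfolding monoNE_def
proof (intro allI impI)
  fix s t :: real assume st: "0 \<le> s" "s \<le> t" "t \<le> 1"
  show "leqp ((g1 +++ g2) s) ((g1 +++ g2) t)"
  proof (cases "t \<le> 1/2")
    case True
    then show ?thesis using m1 st unfolding monoNE_def joinpaths_def by auto
  next
    case False
    show ?thesis
    proof (cases "s \<le> 1/2")
      case True
      have "leqp (g1 (2 * s)) (g1 1)" using m1 st True unfolding monoNE_def by auto
      moreover have "leqp (g2 0) (g2 (2 * t - 1))" using m2 st False unfolding monoNE_def by auto
      ultimately show ?thesis using True False e unfolding joinpaths_def pathfinish_def pathstart_def
        by (auto intro: leqp_trans)
    next
      case False
      then show ?thesis using m2 st unfolding monoNE_def joinpaths_def by auto
    qed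
  qed
qed

definition x1 :: "real \<times> real \<times> real \<times> real \<Rightarrow> real" where "x1 r = fst r"
definition x2 :: "real \<times> real \<times> real \<times> real \<Rightarrow> real" where "x2 r = fst (snd r)"
definition y1 :: "real \<times> real \<times> real \<times> real \<Rightarrow> real" where "y1 r = fst (snd (snd r))"
definition y2 :: "real \<times> real \<times> real \<times> real \<Rightarrow> real" where "y2 r = snd (snd (snd r))"
definition rect :: "real \<times> real \<times> real \<times> real \<Rightarrow> (real \<times> real) set" where
  "rect r = {x1 r..x2 r} \<times> {y1 r..y2 r}"
definition irect :: "real \<times> real \<times> real \<times> real \<Rightarrow> (real \<times> real) set" where
  "irect r = {x1 r<..<x2 r} \<times> {y1 r<..<y2 r}"

lemma irect_sub: "irect r \<subseteq> rect r" unfolding rect_def irect_def by auto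

lemma vert_ok:
  assumes p: "p \<notin> \<Union>(irect ` F)"
    and z: "fst z = fst p" "snd p \<le> snd z"
    and bl: "\<forall>r\<in>F. x1 r < fst p \<and> fst p < x2 r \<and> snd p \<le> y1 r \<longrightarrow> snd z \<le> y1 r"
  shows "z \<notin> \<Union>(irect ` F)"
proof
  assume "z \<in> \<Union>(irect ` F)"
  then obtain r where r: "r \<in> F" "z \<in> irect r" by auto
  then have a: "x1 r < fst p" "fst p < x2 r" "y1 r < snd z" "snd z < y2 r"
    using z unfolding irect_def by (auto simp: mem_Times_iff)
  show False
  proof (cases "snd p \<le> y1 r")
    case True then show False using bl r a by force
  next
    case False
    then have "p \<in> irect r" if "snd p < y2 r" using a that unfolding irect_def by (auto simp: mem_Times_iff)
    then show False using p r a z by force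
  qed
qed

lemma seg_coords:
  fixes z :: "real \<times> real"
  assumes "z \<in> closed_segment a b"
  obtains u where "0 \<le> u" "u \<le> 1" "fst z = fst a + u * (fst b - fst a)" "snd z = snd a + u * (snd b - snd a)"
proof -
  obtain u where u: "0 \<le> u" "u \<le> 1" "z = (1 - u) *\<^sub>R a + u *\<^sub>R b" using assms by (auto simp: in_segment)
  have "fst z = (1 - u) * fst a + u * fst b" "snd z = (1 - u) * snd a + u * snd b" using u(3) by auto
  then show ?thesis using that u by (simp add: algebra_simps)
qed
lemma seg_fst: fixes z :: "real \<times> real" shows "z \<in> closed_segment a b \<Longrightarrow> fst a = fst b \<Longrightarrow> fst z = fst a"
  by (erule seg_coords) auto
lemma seg_snd: fixes z :: "real \<times> real" shows "z \<in> closed_segment a b \<Longrightarrow> snd a = snd b \<Longrightarrow> snd z = snd a"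
  by (erule seg_coords) auto
lemma seg_snd_ge: fixes z :: "real \<times> real" shows "z \<in> closed_segment a b \<Longrightarrow> snd a \<le> snd b \<Longrightarrow> snd a \<le> snd z \<and> snd z \<le> snd b"
proof -
  assume z: "z \<in> closed_segment a b" and ab: "snd a \<le> snd b"
  obtain u where u: "0 \<le> u" "u \<le> 1" "snd z = snd a + u * (snd b - snd a)" using seg_coords[OF z] by blast
  moreover have "u * (snd b - snd a) \<ge> 0" "u * (snd b - snd a) \<le> snd b - snd a"
    using u ab by (auto simp: mult_left_le_one_le)
  ultimately show ?thesis by linarith
qed

lemma convex_rect: "convex (rect r)" unfolding rect_def by (intro convex_Times) auto

lemma ne_main:
  fixes P0 :: "(real \<times> real) set" and F :: "(real \<times> real \<times> real \<times> real) set"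
  assumes fin: "finite F" and cvx: "convex P0" and cpt: "compact P0"
    and ok: "\<forall>r\<in>F. x1 r < x2 r \<and> y1 r < y2 r"
    and sub: "\<forall>r\<in>F. rect r \<subseteq> interior P0"
    and dis: "\<forall>r\<in>F. \<forall>r'\<in>F. r \<noteq> r' \<longrightarrow> rect r \<inter> rect r' = {}"
    and p: "p \<in> P0 - \<Union>(irect ` F)"
  shows "\<exists>g. path g \<and> path_image g \<subseteq> P0 - \<Union>(irect ` F) \<and> pathstart g = p
           \<and> pathfinish g \<in> P0 - interior P0 \<and> monoNE g"
proof -
  define P where "P = P0 - \<Union>(irect ` F)"
  define rel where "rel = (\<lambda>p::real\<times>real. {r\<in>F. fst p < x2 r \<and> snd p < y2 r})"
  have finrel: "finite (rel q)" for q unfolding rel_def using fin by auto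
  have cl: "closed P0" using cpt compact_imp_closed by blast
  have bd: "bounded P0" using cpt compact_imp_bounded by blast
  have P0sub: "interior P0 \<subseteq> P0" by (rule interior_subset)
  have main: "\<And>p. card (rel p) \<le> n \<Longrightarrow> p \<in> P \<Longrightarrow> \<exists>g. path g \<and> path_image g \<subseteq> P \<and> pathstart g = p
           \<and> pathfinish g \<in> P0 - interior P0 \<and> monoNE g" for n
  proof (induction n rule: less_induct)
    case (less n p)
    have pP0: "p \<in> P0" and pF: "p \<notin> \<Union>(irect ` F)" using less.prems unfolding P_def by auto
    show ?case
    proof (cases "p \<in> interior P0")
      case False
      have m: "monoNE (linepath p p)" by (rule mono_line) (simp add: leqp_def)
      have "path (linepath p p)" "path_image (linepath p p) \<subseteq> P" "pathstart (linepath p p) = p"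
        "pathfinish (linepath p p) \<in> P0 - interior P0" using False pP0 less.prems by auto
      then show ?thesis using m by blast
    next
      case True
      define Bl where "Bl = {r\<in>F. x1 r < fst p \<and> fst p < x2 r \<and> snd p \<le> y1 r}"
      show ?thesis
      proof (cases "Bl = {}")
        case True
        obtain d where d: "0 < d" "p + d *\<^sub>R (0,1) \<in> frontier P0"
          using ray_to_frontier[OF bd \<open>p \<in> interior P0\<close>, of "(0,1)"] by (auto simp: zero_prod_def)
        define q where "q = p + d *\<^sub>R (0,1)"
        have qP0: "q \<in> P0 - interior P0" using d cl unfolding q_def frontier_def by auto
        have segP0: "closed_segment p q \<subseteq> P0"
          using cvx pP0 qP0 by (simp add: closed_segment_subset)
        have q12: "fst q = fst p" "snd p \<le> snd q" using d unfolding q_def by auto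
        have "z \<notin> \<Union>(irect ` F)" if z: "z \<in> closed_segment p q" for z
        proof (rule vert_ok[OF pF])
          show "fst z = fst p" using seg_fst[OF z] q12 by simp
          show "snd p \<le> snd z" using seg_snd_ge[OF z] q12 by simp
          show "\<forall>r\<in>F. x1 r < fst p \<and> fst p < x2 r \<and> snd p \<le> y1 r \<longrightarrow> snd z \<le> y1 r"
            using True unfolding Bl_def by auto
        qed
        then have "closed_segment p q \<subseteq> P" using segP0 unfolding P_def by auto
        moreover have "leqp p q" using q12 unfolding leqp_def by auto
        ultimately show ?thesis
          by (intro exI[of _ "linepath p q"]) (use qP0 in \<open>auto intro!: mono_line\<close>)
      next
        case False
        have finBl: "finite Bl" unfolding Bl_def using fin by auto
        define m where "m = Min (y1 ` Bl)"
        have "m \<in> y1 ` Bl" unfolding m_def using finBl False by (intro Min_in) auto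
        then obtain r0 where r0: "r0 \<in> Bl" "y1 r0 = m" by auto
        have r0min: "\<forall>r\<in>Bl. y1 r0 \<le> y1 r" using r0 finBl unfolding m_def by auto
        have r0F: "r0 \<in> F" and r0b: "x1 r0 < fst p" "fst p < x2 r0" "snd p \<le> y1 r0"
          using r0 unfolding Bl_def by auto
        have r0ok: "x1 r0 < x2 r0" "y1 r0 < y2 r0" using ok r0F by auto
        define q1 where "q1 = (fst p, y1 r0)"
        define q2 where "q2 = (x2 r0, y1 r0)"
        define q3 where "q3 = (x2 r0, y2 r0)"
        have inr: "q1 \<in> rect r0" "q2 \<in> rect r0" "q3 \<in> rect r0"
          unfolding q1_def q2_def q3_def rect_def using r0b r0ok by auto
        have rP0: "rect r0 \<subseteq> P0" using sub r0F P0sub by blast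
        have other: "z \<notin> irect r" if "z \<in> rect r0" "r \<in> F" "r \<noteq> r0" for z r
          using dis that r0F irect_sub by blast
        have s1: "closed_segment p q1 \<subseteq> P"
        proof -
          have "closed_segment p q1 \<subseteq> P0" using cvx pP0 inr rP0 by (simp add: closed_segment_subset subsetD)
          moreover have "z \<notin> \<Union>(irect ` F)" if z: "z \<in> closed_segment p q1" for z
          proof (rule vert_ok[OF pF])
            show "fst z = fst p" using seg_fst[OF z] unfolding q1_def by simp
            show "snd p \<le> snd z" using seg_snd_ge[OF z] r0b unfolding q1_def by simp
            show "\<forall>r\<in>F. x1 r < fst p \<and> fst p < x2 r \<and> snd p \<le> y1 r \<longrightarrow> snd z \<le> y1 r"
            proof (intro ballI impI)
              fix r assume "r \<in> F" "x1 r < fst p \<and> fst p < x2 r \<and> snd p \<le> y1 r"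
              then have "r \<in> Bl" unfolding Bl_def by auto
              then have "y1 r0 \<le> y1 r" using r0min by auto
              moreover have "snd z \<le> y1 r0" using seg_snd_ge[OF z] r0b unfolding q1_def by simp
              ultimately show "snd z \<le> y1 r" by linarith
            qed
          qed
          ultimately show ?thesis unfolding P_def by auto
        qed
        have s2: "closed_segment q1 q2 \<subseteq> P"
        proof
          fix z assume z: "z \<in> closed_segment q1 q2"
          have zr: "z \<in> rect r0" using z inr convex_rect closed_segment_subset by blast
          have "snd z = y1 r0" using seg_snd[OF z] unfolding q1_def q2_def by simp
          then have "z \<notin> irect r0" unfolding irect_def by (auto simp: mem_Times_iff)
          then show "z \<in> P" using zr rP0 other[OF zr] unfolding P_def by blast
        qed
        have s3: "closed_segment q2 q3 \<subseteq> P"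
        proof
          fix z assume z: "z \<in> closed_segment q2 q3"
          have zr: "z \<in> rect r0" using z inr convex_rect closed_segment_subset by blast
          have "fst z = x2 r0" using seg_fst[OF z] unfolding q2_def q3_def by simp
          then have "z \<notin> irect r0" unfolding irect_def by (auto simp: mem_Times_iff)
          then show "z \<in> P" using zr rP0 other[OF zr] unfolding P_def by blast
        qed
        have q3P: "q3 \<in> P" using s3 by auto
        have relsub: "rel q3 \<subset> rel p"
        proof
          show "rel q3 \<subseteq> rel p" unfolding rel_def q3_def using r0b r0ok by auto
          have "r0 \<in> rel p" "r0 \<notin> rel q3" unfolding rel_def q3_def using r0F r0b r0ok by auto
          then show "rel q3 \<noteq> rel p" by blast
        qed
        have "card (rel q3) < card (rel p)" using relsub finrel by (simp add: psubset_card_mono)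
        then have "card (rel q3) < n" using less.prems by linarith
        then obtain g' where g': "path g'" "path_image g' \<subseteq> P" "pathstart g' = q3"
          "pathfinish g' \<in> P0 - interior P0" "monoNE g'"
          using less.IH[OF _ order.refl q3P] by blast
        have l1: "leqp p q1" "leqp q1 q2" "leqp q2 q3"
          unfolding leqp_def q1_def q2_def q3_def using r0b r0ok by auto
        define g where "g = linepath p q1 +++ (linepath q1 q2 +++ (linepath q2 q3 +++ g'))"
        have "path g" unfolding g_def using g' by auto
        moreover have "path_image g \<subseteq> P" unfolding g_def using g' s1 s2 s3
          by (simp add: path_image_join)
        moreover have "monoNE g" unfolding g_def using g' l1
          by (intro mono_join mono_line) auto
        moreover have "pathstart g = p" "pathfinish g = pathfinish g'" unfolding g_def by simp_all
        ultimately show ?thesis using g'(4) by (intro exI[of _ g]) simp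
      qed
    qed
  qed
  show ?thesis using main[OF order.refl] p unfolding P_def by blast
qed


lemma half_sum_le: "((A::real) + B) / 2 \<le> sqrt (A^2 + B^2)"
proof -
  have a: "A \<le> sqrt (A^2 + B^2)" using real_sqrt_ge_abs1[of A B] abs_ge_self[of A] by linarith
  have b: "B \<le> sqrt (A^2 + B^2)" using real_sqrt_ge_abs2[of B A] abs_ge_self[of B] by linarith
  have "A + B \<le> sqrt (A^2 + B^2) + sqrt (A^2 + B^2)" by (rule add_mono[OF a b])
  then show ?thesis by simp
qed

lemma neg_img: "uminus ` A = {z::'a::ab_group_add. - z \<in> A}"
  by (auto simp: image_iff) (metis minus_minus)

lemma rect_conv:
  fixes a b :: "real \<times> real"
  assumes "box a b \<noteq> {}"
  shows "cbox a b = {fst a..fst b} \<times> {snd a..snd b}"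
    "interior (cbox a b) = {fst a<..<fst b} \<times> {snd a<..<snd b}"
    "fst a < fst b" "snd a < snd b"
proof -
  obtain a1 a2 b1 b2 where ab: "a = (a1,a2)" "b = (b1,b2)" by (cases a, cases b) auto
  have bx: "box a b = {a1<..<b1} \<times> {a2<..<b2}"
    unfolding ab by (auto simp: mem_box Basis_prod_def)
  show "cbox a b = {fst a..fst b} \<times> {snd a..snd b}" unfolding ab by (auto simp: cbox_Pair_eq)
  show "interior (cbox a b) = {fst a<..<fst b} \<times> {snd a<..<snd b}" using bx ab by simp
  show "fst a < fst b" "snd a < snd b" using assms bx ab by auto
qed

definition rf :: "real \<times> real \<times> real \<times> real \<Rightarrow> real \<times> real \<times> real \<times> real" where
  "rf r = (- x2 r, - x1 r, - y2 r, - y1 r)"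

lemma rf_simps: "x1 (rf r) = - x2 r" "x2 (rf r) = - x1 r" "y1 (rf r) = - y2 r" "y2 (rf r) = - y1 r"
  unfolding rf_def x1_def x2_def y1_def y2_def by auto

lemma rect_rf: "rect (rf r) = {z. - z \<in> rect r}"
  unfolding rect_def by (auto simp: rf_simps mem_Times_iff)
lemma irect_rf: "irect (rf r) = {z. - z \<in> irect r}"
  unfolding irect_def by (auto simp: rf_simps mem_Times_iff)

lemma rf_inj: "rf r = rf r' \<Longrightarrow> r = r'"
  unfolding rf_def x1_def x2_def y1_def y2_def by (cases r, cases r') auto

lemma inscribed_neg: fixes g :: "real \<Rightarrow> 'a::real_normed_vector" shows "inscribed_length (uminus \<circ> g) ts = inscribed_length g ts"
  unfolding inscribed_length_def o_def dist_minus ..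

theorem proposition3:
  fixes h :: nat and P0 :: "(real \<times> real) set" and H :: "nat \<Rightarrow> (real \<times> real) set"
  assumes "in_class_C h P0 H"
    and "\<forall>i\<in>{1..h}. axis_rectangle (H i)"
    and "s \<in> domain h P0 H"
  shows "\<exists>g. rectifiable_path g \<and> path_image g \<subseteq> domain h P0 H \<and> pathstart g = s
             \<and> pathfinish g \<in> frontier P0 \<and> path_length g \<le> diameter (domain h P0 H)"
proof -
  have cp: "convex_polygon P0" and hs: "\<forall>i\<in>{1..h}. H i \<subseteq> interior P0"
    and hd: "\<forall>i\<in>{1..h}. \<forall>j\<in>{1..h}. i \<noteq> j \<longrightarrow> H i \<inter> H j = {}"
    using assms(1) unfolding in_class_C_def by auto
  obtain V where V: "finite V" "P0 = convex hull V" using cp unfolding convex_polygon_def by auto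
  have cvx: "convex P0" using V by (simp add: convex_convex_hull)
  have cpt: "compact P0" using V by (simp add: compact_convex_hull finite_imp_compact)
  have cl: "closed P0" using cpt compact_imp_closed by blast
  have fr: "frontier P0 = P0 - interior P0" using cl by (simp add: frontier_def closure_closed)
  have "\<forall>i\<in>{1..h}. \<exists>r. H i = rect r \<and> interior (H i) = irect r \<and> x1 r < x2 r \<and> y1 r < y2 r"
  proof
    fix i assume "i \<in> {1..h}"
    then obtain a b where ab: "H i = cbox a b" "box a b \<noteq> {}" using assms(2) \<open>i \<in> {1..h}\<close> unfolding axis_rectangle_def by blast
    show "\<exists>r. H i = rect r \<and> interior (H i) = irect r \<and> x1 r < x2 r \<and> y1 r < y2 r"
      by (rule exI[of _ "(fst a, fst b, snd a, snd b)"])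
        (use ab rect_conv[OF ab(2)] in \<open>simp add: rect_def irect_def x1_def x2_def y1_def y2_def\<close>)
  qed
  then obtain tup where tup: "\<forall>i\<in>{1..h}. H i = rect (tup i) \<and> interior (H i) = irect (tup i) \<and> x1 (tup i) < x2 (tup i) \<and> y1 (tup i) < y2 (tup i)"
    by metis
  define F where "F = tup ` {1..h}"
  define P where "P = domain h P0 H"
  have ti: "\<And>i. i \<in> {1..h} \<Longrightarrow> interior (H i) = irect (tup i)" using tup by blast
  have "(\<lambda>i. interior (H i)) ` {1..h} = (\<lambda>i. irect (tup i)) ` {1..h}"
    by (rule image_cong[OF refl ti])
  then have PF: "P = P0 - \<Union>(irect ` F)" unfolding P_def domain_def F_def image_image by simp
  have finF: "finite F" unfolding F_def by auto
  have okF: "\<forall>r\<in>F. x1 r < x2 r \<and> y1 r < y2 r" unfolding F_def using tup by auto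
  have subF: "\<forall>r\<in>F. rect r \<subseteq> interior P0" unfolding F_def using tup hs by auto
  have disF: "\<forall>r\<in>F. \<forall>r'\<in>F. r \<noteq> r' \<longrightarrow> rect r \<inter> rect r' = {}"
  proof (intro ballI impI)
    fix r r' assume "r \<in> F" "r' \<in> F" "r \<noteq> r'"
    then obtain i j where ij: "i \<in> {1..h}" "j \<in> {1..h}" "r = tup i" "r' = tup j" "i \<noteq> j"
      unfolding F_def by blast
    then have "rect r = H i" "rect r' = H j" using tup by auto
    then show "rect r \<inter> rect r' = {}" using hd ij by auto
  qed
  have sP: "s \<in> P0 - \<Union>(irect ` F)" using assms(3) PF P_def by auto
  obtain g1 where g1: "path g1" "path_image g1 \<subseteq> P0 - \<Union>(irect ` F)" "pathstart g1 = s"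
      "pathfinish g1 \<in> P0 - interior P0" "monoNE g1"
    using ne_main[OF finF cvx cpt okF subF disF sP] by blast
  define P0' where "P0' = uminus ` P0"
  define F' where "F' = rf ` F"
  have P0'd: "P0' = {z. - z \<in> P0}" unfolding P0'_def by (rule neg_img)
  have "interior P0' = uminus ` interior P0" unfolding P0'_def by (rule interior_negations)
  then have intP0': "interior P0' = {z. - z \<in> interior P0}" by (simp only: neg_img)
  have finF': "finite F'" unfolding F'_def using finF by auto
  have cvx': "convex P0'" unfolding P0'_def using cvx by (rule convex_negations)
  have cpt': "compact P0'" unfolding P0'_def using cpt by (rule compact_negations)
  have okF': "\<forall>r\<in>F'. x1 r < x2 r \<and> y1 r < y2 r" unfolding F'_def using okF by (auto simp: rf_simps)
  have subF': "\<forall>r\<in>F'. rect r \<subseteq> interior P0'" unfolding F'_def intP0' using subF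
    by (auto simp: rect_rf)
  have disF': "\<forall>r\<in>F'. \<forall>r'\<in>F'. r \<noteq> r' \<longrightarrow> rect r \<inter> rect r' = {}"
  proof (intro ballI impI)
    fix r r' assume "r \<in> F'" "r' \<in> F'" "r \<noteq> r'"
    then obtain q q' where "q \<in> F" "q' \<in> F" "r = rf q" "r' = rf q'" "q \<noteq> q'" unfolding F'_def by blast
    then show "rect r \<inter> rect r' = {}" using disF by (auto simp: rect_rf)
  qed
  have sP': "- s \<in> P0' - \<Union>(irect ` F')" using sP unfolding P0'd F'_def by (auto simp: irect_rf)
  obtain g2' where g2': "path g2'" "path_image g2' \<subseteq> P0' - \<Union>(irect ` F')" "pathstart g2' = - s"
      "pathfinish g2' \<in> P0' - interior P0'" "monoNE g2'"
    using ne_main[OF finF' cvx' cpt' okF' subF' disF' sP'] by blast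
  define g2 where "g2 = uminus \<circ> g2'"
  have pg2: "path g2" unfolding g2_def
    by (rule path_continuous_image[OF g2'(1)]) (intro continuous_intros)
  have ig2: "path_image g2 \<subseteq> P0 - \<Union>(irect ` F)"
  proof
    fix z assume "z \<in> path_image g2"
    then obtain w where w: "w \<in> path_image g2'" "z = - w" unfolding g2_def path_image_compose by auto
    then have "w \<in> P0' - \<Union>(irect ` F')" using g2'(2) by auto
    then show "z \<in> P0 - \<Union>(irect ` F)" using w unfolding P0'd F'_def by (auto simp: irect_rf)
  qed
  have sg2: "pathstart g2 = s" using g2' unfolding g2_def pathstart_def by simp
  have "pathfinish g2' \<in> P0'" "pathfinish g2' \<notin> interior P0'" using g2'(4) by auto
  then have "- pathfinish g2' \<in> P0" "- pathfinish g2' \<notin> interior P0"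
    unfolding intP0' by (simp_all add: P0'd)
  then have fg2: "pathfinish g2 \<in> P0 - interior P0" unfolding g2_def pathfinish_def by simp
  have len2: "rectifiable_path g2 = rectifiable_path g2'" "path_length g2 = path_length g2'"
    unfolding rectifiable_path_def path_length_def g2_def inscribed_neg using pg2 g2'(1) g2_def by auto
  define t1 where "t1 = pathfinish g1"
  define t2 where "t2 = pathfinish g2"
  have m1: "rectifiable_path g1" "path_length g1 \<le> (fst t1 - fst s) + (snd t1 - snd s)"
    using mono_length[OF g1(1) g1(5)] g1(3) unfolding t1_def pathstart_def pathfinish_def by auto
  have g2'1: "g2' 1 = - t2" unfolding t2_def g2_def pathfinish_def by simp
  have m2: "rectifiable_path g2" "path_length g2 \<le> (fst s - fst t2) + (snd s - snd t2)"
    using mono_length[OF g2'(1) g2'(5)] g2'(3) g2'1 len2 unfolding pathstart_def by auto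
  have bdP: "bounded P" unfolding PF using cpt compact_imp_bounded bounded_subset by blast
  have t1P: "t1 \<in> P" unfolding t1_def PF using g1(2) pathfinish_in_path_image by blast
  have t2P: "t2 \<in> P" unfolding t2_def PF using ig2 pathfinish_in_path_image by blast
  have "dist t1 t2 = sqrt ((fst t1 - fst t2)^2 + (snd t1 - snd t2)^2)"
    by (metis dist_Pair_Pair dist_real_def prod.collapse power2_abs)
  then have "((fst t1 - fst s) + (snd t1 - snd s) + ((fst s - fst t2) + (snd s - snd t2))) / 2 \<le> dist t1 t2"
    using half_sum_le[of "fst t1 - fst t2" "snd t1 - snd t2"] by simp
  also have "\<dots> \<le> diameter P" using diameter_bounded_bound[OF bdP t1P t2P] .
  finally have key: "((fst t1 - fst s) + (snd t1 - snd s) + ((fst s - fst t2) + (snd s - snd t2))) / 2 \<le> diameter P" .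
  have D: "domain h P0 H = P0 - \<Union>(irect ` F)" using PF unfolding P_def .
  show ?thesis
  proof (cases "path_length g1 \<le> diameter P")
    case True
    then have "path_length g1 \<le> diameter (P0 - \<Union>(irect ` F))" using PF by simp
    then show ?thesis unfolding D by (intro exI[of _ g1]) (use m1 g1 fr in auto)
  next
    case False
    have k2: "((fst t1 - fst s) + (snd t1 - snd s)) + ((fst s - fst t2) + (snd s - snd t2)) \<le> 2 * diameter P"
      using key by simp
    define L1 where "L1 = (fst t1 - fst s) + (snd t1 - snd s)"
    define L2 where "L2 = (fst s - fst t2) + (snd s - snd t2)"
    have "L1 + L2 \<le> 2 * diameter P" "path_length g1 \<le> L1" "path_length g2 \<le> L2"
      using k2 m1 m2 unfolding L1_def L2_def by auto
    then have "path_length g2 \<le> diameter P" using False by linarith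
    then have "path_length g2 \<le> diameter (P0 - \<Union>(irect ` F))" using PF by simp
    then show ?thesis unfolding D by (intro exI[of _ g2]) (use m2 ig2 sg2 fg2 fr in auto)
  qed
qed

end
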